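(* Under the hypotheses of Theorem 1 (namely: $p$ positive, continuous, even on $(-1,1)$ with no nontrivial solution of $u''+pu=0$ having more than one zero in $(-1,1)$; $F$ the solution of $\mathcal{S}F=2p$ with $F(0)=0,F'(0)=1,F''(0)=0$; $\varphi:(-1,1)\to\mathbb{R}^n$ of class $C^3$ with $\varphi'\neq0$, $\varphi(0)=0$, $|\varphi'(0)|=1$, $\langle\varphi'(0),\varphi''(0)\rangle=0$, and $S_1\varphi\le 2p$ on $(-1,1)$), one has for all $x\in(-1,1)$ $$\frac{|\varphi(x)|}{|\varphi'(x)|^{1/2}}\ \ge\ \frac{|F(x)|}{F'(x)^{1/2}}.$$
   Context: For a real function $g$ with $g'\neq0$, $\mathcal{S}g=(g''/g')'-\tfrac12(g''/g')^2$. For a $C^3$ curve $\varphi$ into $\mathbb{R}^n$ with $\varphi'\neq0$, the Ahlfors Schwarzian is $S_1\varphi=\frac{\langle\varphi',\varphi'''\rangle}{|\varphi'|^2}-3\frac{\langle\varphi',\varphi''\rangle^2}{|\varphi'|^4}+\frac32\frac{|\varphi''|^2}{|\varphi'|^2}$, with Euclidean inner product and norm. *)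

theory Defs
  imports "HOL-Analysis.Analysis"
begin

definition vd :: "(real \<Rightarrow> 'a::real_normed_vector) \<Rightarrow> real \<Rightarrow> 'a" where
  "vd f = (\<lambda>t. vector_derivative f (at t))"

definition C3_on :: "real set \<Rightarrow> (real \<Rightarrow> 'a::real_normed_vector) \<Rightarrow> bool" where
  "C3_on S f \<longleftrightarrow> (\<exists>f1 f2 f3.
      (\<forall>x\<in>S. (f has_vector_derivative f1 x) (at x)) \<and>
      (\<forall>x\<in>S. (f1 has_vector_derivative f2 x) (at x)) \<and>
      (\<forall>x\<in>S. (f2 has_vector_derivative f3 x) (at x)) \<and>
      continuous_on S f3)"

definition schwarzian :: "(real \<Rightarrow> real) \<Rightarrow> real \<Rightarrow> real" where
  "schwarzian g x =
     deriv (\<lambda>t. deriv (deriv g) t / deriv g t) x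
     - (1/2) * (deriv (deriv g) x / deriv g x)^2"

definition ahlfors_S1 :: "(real \<Rightarrow> 'a::real_inner) \<Rightarrow> real \<Rightarrow> real" where
  "ahlfors_S1 \<phi> x =
     (let a = vd \<phi> x; b = vd (vd \<phi>) x; c = vd (vd (vd \<phi>)) x in
       inner a c / (norm a)^2 - 3 * (inner a b)^2 / (norm a)^4
       + (3/2) * (norm b)^2 / (norm a)^2)"

definition disconjugate_on :: "real set \<Rightarrow> (real \<Rightarrow> real) \<Rightarrow> bool" where
  "disconjugate_on S p \<longleftrightarrow> (\<forall>u u'.
      ((\<forall>x\<in>S. (u has_real_derivative u' x) (at x)) \<and>
       (\<forall>x\<in>S. (u' has_real_derivative (- p x * u x)) (at x)) \<and>
       (\<exists>x\<in>S. u x \<noteq> 0))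
      \<longrightarrow> \<not> (\<exists>a\<in>S. \<exists>b\<in>S. a \<noteq> b \<and> u a = 0 \<and> u b = 0))"

end

theory Submission
  imports Defs
begin
lemma vec_ineq:
  fixes P a b :: "'a::real_inner"
  assumes "a \<noteq> 0"
  defines "A \<equiv> inner a a" and "\<rho> \<equiv> inner P P"
  shows "0 \<le> 4*\<rho>*A^3 + 4*\<rho>*A^2*inner P b - 4*A^2*(inner P a)^2 - 4*\<rho>*inner P a*inner a b*A
          - \<rho>^2*(inner a b)^2 + \<rho>^2*inner b b*A"
proof -
  have A: "A > 0" using assms by (simp add: A_def)
  define v where "v = \<rho> *\<^sub>R (b - (inner a b / A) *\<^sub>R a) + (2*A) *\<^sub>R (P - (inner P a / A) *\<^sub>R a)"
  have "inner v v \<ge> 0" by simp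
  moreover have "A * inner v v = 4*\<rho>*A^3 + 4*\<rho>*A^2*inner P b - 4*A^2*(inner P a)^2 - 4*\<rho>*inner P a*inner a b*A
          - \<rho>^2*(inner a b)^2 + \<rho>^2*inner b b*A"
    using A unfolding v_def
    by (simp add: inner_add_left inner_add_right inner_diff_left inner_diff_right inner_commute
        field_simps power2_eq_square power3_eq_cube flip: A_def \<rho>_def)
  ultimately show ?thesis using A by (metis mult_nonneg_nonneg less_imp_le)
qed

lemma scal_id:
  fixes n q ca cb B f2sq f13 :: real
  assumes "n > 0" "q > 0"
  defines "nd \<equiv> ca/n" and "qd \<equiv> cb/(2*q^3)" and "cad \<equiv> q^4 + B" and "cbd \<equiv> f2sq + f13"
  defines "w1d \<equiv> (cad*(n*q) - ca*(nd*q + n*qd))/(n*q)^2 - ((nd*cb + n*cbd)*(2*q^5) - n*cb*(10*q^4*qd))/(2*q^5)^2"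
  defines "S \<equiv> f13/q^4 - 3*cb^2/q^8 + 3/2*f2sq/q^4"
  defines "\<rho> \<equiv> n^2" and "A \<equiv> q^4"
  shows "w1d + (1/2)*S*(n/q) = (4*\<rho>*A^3 + 4*\<rho>*A^2*B - 4*A^2*ca^2 - 4*\<rho>*ca*cb*A
          - \<rho>^2*cb^2 + \<rho>^2*f2sq*A) / (4*n^3*q^9)"
  using assms(1,2) unfolding assms(3-) apply (simp add: field_simps) by algebra
lemma inner_vd:
  fixes f g :: "real \<Rightarrow> 'a::real_inner"
  assumes "(f has_vector_derivative f') (at t)" "(g has_vector_derivative g') (at t)"
  shows "((\<lambda>s. inner (f s) (g s)) has_real_derivative (inner (f t) g' + inner f' (g t))) (at t)"
proof -
  have "((\<lambda>s. inner (f s) (g s)) has_derivative (\<lambda>h. inner (f t) (h *\<^sub>R g') + inner (h *\<^sub>R f') (g t))) (at t)"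
    using assms unfolding has_vector_derivative_def by (intro derivative_intros) auto
  then show ?thesis unfolding has_field_derivative_def
    by (rule has_derivative_eq_rhs) (auto simp: fun_eq_iff algebra_simps)
qed

lemma norm_vd:
  fixes f :: "real \<Rightarrow> 'a::real_inner"
  assumes "(f has_vector_derivative f') (at t)" "f t \<noteq> 0"
  shows "((\<lambda>s. norm (f s)) has_real_derivative (inner (f t) f' / norm (f t))) (at t)"
proof -
  have e: "(\<lambda>s. norm (f s)) = (\<lambda>s. sqrt (inner (f s) (f s)))" by (simp add: norm_eq_sqrt_inner)
  have i: "((\<lambda>s. inner (f s) (f s)) has_real_derivative (2 * inner (f t) f')) (at t)"
    using inner_vd[OF assms(1) assms(1)] by (simp add: inner_commute)
  have pos: "0 < inner (f t) (f t)" using assms(2) by simp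
  have "((\<lambda>s. sqrt (inner (f s) (f s))) has_real_derivative (inverse (sqrt (inner (f t) (f t))) / 2 * (2 * inner (f t) f'))) (at t)"
    by (rule DERIV_chain2[OF DERIV_real_sqrt[OF pos] i])
  then show ?thesis unfolding e by (simp add: norm_eq_sqrt_inner field_simps)
qed

lemma core:
  fixes \<phi> f1 f2 f3 :: "real \<Rightarrow> 'a::real_inner" and p U U1 :: "real \<Rightarrow> real"
  assumes d1: "\<And>t. t \<in> {-1<..<1} \<Longrightarrow> (\<phi> has_vector_derivative f1 t) (at t)"
    and d2: "\<And>t. t \<in> {-1<..<1} \<Longrightarrow> (f1 has_vector_derivative f2 t) (at t)"
    and d3: "\<And>t. t \<in> {-1<..<1} \<Longrightarrow> (f2 has_vector_derivative f3 t) (at t)"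
    and nz: "\<And>t. t \<in> {-1<..<1} \<Longrightarrow> f1 t \<noteq> 0"
    and i0: "\<phi> 0 = 0" "norm (f1 0) = 1"
    and dU: "\<And>t. t \<in> {-1<..<1} \<Longrightarrow> (U has_real_derivative U1 t) (at t)"
    and dU1: "\<And>t. t \<in> {-1<..<1} \<Longrightarrow> (U1 has_real_derivative (- p t * U t)) (at t)"
    and U0: "U 0 = 0" "U1 0 = 1"
    and Upos: "\<And>t. 0 < t \<Longrightarrow> t < 1 \<Longrightarrow> U t > 0"
    and S: "\<And>t. 0 < t \<Longrightarrow> t < 1 \<Longrightarrow> inner (f1 t) (f3 t) / (norm (f1 t))^2
          - 3 * (inner (f1 t) (f2 t))^2 / (norm (f1 t))^4 + 3/2 * (norm (f2 t))^2 / (norm (f1 t))^2 \<le> 2 * p t"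
  shows "\<And>x. 0 < x \<Longrightarrow> x < 1 \<Longrightarrow> U x \<le> norm (\<phi> x) / sqrt (norm (f1 x))"
proof -
  define n where "n t = norm (\<phi> t)" for t
  define q where "q t = sqrt (norm (f1 t))" for t
  define c1 where "c1 t = inner (\<phi> t) (f1 t)" for t
  define c2 where "c2 t = inner (f1 t) (f2 t)" for t
  define w where "w t = n t / q t" for t
  define w1 where "w1 t = c1 t / (n t * q t) - n t * c2 t / (2 * q t ^ 5)" for t
  define Q where "Q t = w1 t * U t - w t * U1 t" for t
  define I where "I = {-1<..<1::real}"
  have I: "t \<in> I" if "0 < t" "t < 1" for t using that by (auto simp: I_def)
  have I0: "0 \<in> I" by (simp add: I_def)
  have oI: "open I" by (simp add: I_def)
  have qpos: "q t > 0" if "t \<in> I" for t using nz[of t] that by (simp add: q_def I_def)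
  have q2: "q t ^ 2 = norm (f1 t)" for t by (simp add: q_def)
  have q4: "q t ^ 4 = inner (f1 t) (f1 t)" for t
  proof -
    have "q t ^ 4 = (q t ^ 2)^2" by (simp flip: power_mult)
    then show ?thesis by (simp add: q2 power2_norm_eq_inner)
  qed
  have n2: "n t ^ 2 = inner (\<phi> t) (\<phi> t)" for t by (simp add: n_def power2_norm_eq_inner)
  have dn: "(n has_real_derivative (c1 t / n t)) (at t)" if "t \<in> I" "\<phi> t \<noteq> 0" for t
    using norm_vd[OF d1[of t] that(2)] that unfolding n_def c1_def I_def by (simp add: fun_eq_iff)
  have dq: "(q has_real_derivative (c2 t / (2 * q t ^ 3))) (at t)" if "t \<in> I" for t
  proof -
    have a: "((\<lambda>s. norm (f1 s)) has_real_derivative (c2 t / norm (f1 t))) (at t)"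
      using norm_vd[OF d2[of t] nz[of t]] that unfolding c2_def I_def by simp
    have pos: "0 < norm (f1 t)" using nz[of t] that by (simp add: I_def)
    have "((\<lambda>s. sqrt (norm (f1 s))) has_real_derivative (inverse (sqrt (norm (f1 t))) / 2 * (c2 t / norm (f1 t)))) (at t)"
      by (rule DERIV_chain2[OF DERIV_real_sqrt[OF pos] a])
    moreover have "inverse (sqrt (norm (f1 t))) / 2 * (c2 t / norm (f1 t)) = c2 t / (2 * q t ^ 3)"
      using pos q2[of t] by (simp add: q_def field_simps power3_eq_cube)
    ultimately show ?thesis by (simp add: q_def[abs_def])
  qed
  have dc1: "(c1 has_real_derivative (inner (f1 t) (f1 t) + inner (\<phi> t) (f2 t))) (at t)" if "t \<in> I" for t
    using inner_vd[OF d1[of t] d2[of t]] that unfolding c1_def[abs_def] I_def by (simp add: add.commute)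
  have dc2: "(c2 has_real_derivative (inner (f2 t) (f2 t) + inner (f1 t) (f3 t))) (at t)" if "t \<in> I" for t
    using inner_vd[OF d2[of t] d3[of t]] that unfolding c2_def[abs_def] I_def by (simp add: add.commute inner_commute)
  have cphi: "isCont \<phi> t" if "t \<in> I" for t
    using has_vector_derivative_continuous[OF d1[of t]] that by (simp add: I_def continuous_at)
  have cf1: "isCont f1 t" if "t \<in> I" for t
    using has_vector_derivative_continuous[OF d2[of t]] that by (simp add: I_def continuous_at)
  have cf2: "isCont f2 t" if "t \<in> I" for t
    using has_vector_derivative_continuous[OF d3[of t]] that by (simp add: I_def continuous_at)
  have cn: "isCont n t" if "t \<in> I" for t
    unfolding n_def[abs_def] using cphi[OF that] by (intro continuous_intros)
  have cq: "isCont q t" if "t \<in> I" for t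
    unfolding q_def[abs_def] using cf1[OF that] by (intro continuous_intros)
  have cc2: "isCont c2 t" if "t \<in> I" for t
    unfolding c2_def[abs_def] using cf1[OF that] cf2[OF that] by (intro continuous_intros)
  have cU: "isCont U t" if "t \<in> I" for t using DERIV_isCont[OF dU[of t]] that by (simp add: I_def)
  have cU1: "isCont U1 t" if "t \<in> I" for t using DERIV_isCont[OF dU1[of t]] that by (simp add: I_def)
  have cw: "isCont w t" if "t \<in> I" for t
    unfolding w_def[abs_def] using cn[OF that] cq[OF that] qpos[OF that] by (intro continuous_intros) auto
  have n0: "n 0 = 0" by (simp add: n_def i0)
  have q0: "q 0 = 1" by (simp add: q_def i0)
  have w0: "w 0 = 0" by (simp add: w_def n0)
  have R0: "(g \<longlongrightarrow> g 0) (at_right 0)" if "isCont g 0" for g :: "real \<Rightarrow> real"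
    using that by (simp add: isCont_def Lim_at_imp_Lim_at_within)
  have lphi: "((\<lambda>y. (1/y) *\<^sub>R \<phi> y) \<longlongrightarrow> f1 0) (at_right 0)"
  proof -
    have "(\<phi> has_derivative (\<lambda>h. h *\<^sub>R f1 0)) (at 0)"
      using d1[of 0] by (simp add: has_vector_derivative_def)
    then have "((\<lambda>y. ((\<phi> y - \<phi> 0) - (y - 0) *\<^sub>R f1 0) /\<^sub>R norm (y - 0)) \<longlongrightarrow> 0) (at 0)"
      by (simp only: has_derivative_at_within)
    then have "((\<lambda>y. ((\<phi> y - \<phi> 0) - (y - 0) *\<^sub>R f1 0) /\<^sub>R norm (y - 0)) \<longlongrightarrow> 0) (at_right 0)"
      by (rule Lim_at_imp_Lim_at_within)
    then have "((\<lambda>y. ((\<phi> y - \<phi> 0) - (y - 0) *\<^sub>R f1 0) /\<^sub>R norm (y - 0) + f1 0) \<longlongrightarrow> 0 + f1 0) (at_right 0)"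
      by (intro tendsto_add tendsto_const)
    moreover have "\<forall>\<^sub>F y in at_right 0. ((\<phi> y - \<phi> 0) - (y - 0) *\<^sub>R f1 0) /\<^sub>R norm (y - 0) + f1 0 = (1/y) *\<^sub>R \<phi> y"
      by (rule eventually_at_rightI[of 0 1]) (auto simp: i0 scaleR_diff_right divide_inverse)
    ultimately show ?thesis by (simp add: tendsto_cong)
  qed
  have lnt: "((\<lambda>y. n y / y) \<longlongrightarrow> 1) (at_right 0)"
  proof -
    have "((\<lambda>y. norm ((1/y) *\<^sub>R \<phi> y)) \<longlongrightarrow> norm (f1 0)) (at_right 0)"
      by (intro tendsto_norm lphi)
    moreover have "\<forall>\<^sub>F y in at_right 0. norm ((1/y) *\<^sub>R \<phi> y) = n y / y"
      by (rule eventually_at_rightI[of 0 1]) (auto simp: n_def)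
    ultimately show ?thesis using i0 by (simp add: tendsto_cong)
  qed
  have lUt: "((\<lambda>y. U y / y) \<longlongrightarrow> 1) (at_right 0)"
  proof -
    have "((\<lambda>y. (U y - U 0) / (y - 0)) \<longlongrightarrow> U1 0) (at 0)"
      using dU[of 0] unfolding has_field_derivative_iff by simp
    then have "((\<lambda>y. (U y - U 0) / (y - 0)) \<longlongrightarrow> U1 0) (at_right 0)"
      by (rule Lim_at_imp_Lim_at_within)
    then show ?thesis using U0 by simp
  qed
  have L2: "((\<lambda>y. w y / U y) \<longlongrightarrow> 1) (at_right 0)"
  proof -
    have "((\<lambda>y. (n y / y / q y) / (U y / y)) \<longlongrightarrow> (1 / 1) / 1) (at_right 0)"
      using lnt lUt R0[OF cq[OF I0]] q0 by (intro tendsto_divide) auto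
    moreover have "\<forall>\<^sub>F y in at_right 0. (n y / y / q y) / (U y / y) = w y / U y"
      by (rule eventually_at_rightI[of 0 1]) (auto simp: w_def)
    ultimately show ?thesis using Lim_transform_eventually by fastforce
  qed
  have L1: "(Q \<longlongrightarrow> 0) (at_right 0)"
  proof -
    have e: "Q t = (c1 t / n t) * (U t / q t) - (n t * c2 t * U t) / (2 * q t ^ 5) - w t * U1 t" for t
      by (simp add: Q_def w1_def algebra_simps)
    have t1: "((\<lambda>t. (c1 t / n t) * (U t / q t)) \<longlongrightarrow> 0) (at_right 0)"
    proof (rule Lim_null_comparison)
      show "\<forall>\<^sub>F t in at_right 0. norm (c1 t / n t * (U t / q t)) \<le> norm (f1 t) * \<bar>U t / q t\<bar>"
      proof (rule always_eventually, rule allI)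
        fix t
        have "\<bar>c1 t / n t\<bar> \<le> norm (f1 t)"
        proof (cases "n t = 0")
          case False
          then have "n t > 0" by (simp add: n_def)
          then show ?thesis using Cauchy_Schwarz_ineq2[of "\<phi> t" "f1 t"]
            by (simp add: c1_def n_def abs_div divide_le_eq mult.commute)
        qed simp
        then show "norm (c1 t / n t * (U t / q t)) \<le> norm (f1 t) * \<bar>U t / q t\<bar>"
          unfolding real_norm_def abs_mult by (rule mult_right_mono) auto
      qed
      have "((\<lambda>t. norm (f1 t) * \<bar>U t / q t\<bar>) \<longlongrightarrow> norm (f1 0) * \<bar>U 0 / q 0\<bar>) (at_right 0)"
        using cf1[OF I0] cU[OF I0] cq[OF I0] q0
        by (intro tendsto_intros) (auto simp: isCont_def intro: Lim_at_imp_Lim_at_within)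
      then show "((\<lambda>t. norm (f1 t) * \<bar>U t / q t\<bar>) \<longlongrightarrow> 0) (at_right 0)" using U0 by simp
    qed
    have t2: "((\<lambda>t. (n t * c2 t * U t) / (2 * q t ^ 5) + w t * U1 t) \<longlongrightarrow> (n 0 * c2 0 * U 0) / (2 * q 0 ^ 5) + w 0 * U1 0) (at_right 0)"
      using cn[OF I0] cc2[OF I0] cU[OF I0] cq[OF I0] cw[OF I0] cU1[OF I0] q0
      by (intro tendsto_intros) (auto simp: isCont_def intro: Lim_at_imp_Lim_at_within)
    have "((\<lambda>t. (c1 t / n t) * (U t / q t) - ((n t * c2 t * U t) / (2 * q t ^ 5) + w t * U1 t)) \<longlongrightarrow> 0 - 0) (at_right 0)"
      using tendsto_diff[OF t1 t2] by (simp add: n0 w0)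
    then show ?thesis by (simp add: e[abs_def] algebra_simps)
  qed
  have stepA: "U x \<le> w x" if y: "0 < y" "y \<le> 1" and nzphi: "\<And>t. 0 < t \<Longrightarrow> t < y \<Longrightarrow> \<phi> t \<noteq> 0"
    and x: "0 < x" "x < y" for x y
  proof -
    define w1d where "w1d t = (((q t^4 + inner (\<phi> t) (f2 t))*(n t*q t) - c1 t*(c1 t/n t*q t + n t*(c2 t/(2*q t^3))))/(n t*q t)^2
       - ((c1 t/n t*c2 t + n t*(inner (f2 t) (f2 t) + inner (f1 t) (f3 t)))*(2*q t^5) - n t*c2 t*(10*q t^4*(c2 t/(2*q t^3))))/(2*q t^5)^2)" for t
    have JI: "t \<in> I" if "0<t" "t<y" for t using that y by (auto simp: I_def)
    have Jn: "n t > 0" if "0<t" "t<y" for t using nzphi[OF that] by (simp add: n_def)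
    have Jq: "q t > 0" if "0<t" "t<y" for t using qpos[OF JI[OF that]] .
    have JU: "U t > 0" if "0<t" "t<y" for t using Upos that y by simp
    have dw: "(w has_real_derivative w1 t) (at t)" if "0<t" "t<y" for t
    proof -
      have "((\<lambda>s. n s / q s) has_real_derivative ((c1 t/n t)*q t - n t*(c2 t/(2*q t^3)))/(q t*q t)) (at t)"
        by (rule DERIV_divide[OF dn[OF JI[OF that] nzphi[OF that]] dq[OF JI[OF that]]]) (use Jq[OF that] in simp)
      moreover have "((c1 t/n t)*q t - n t*(c2 t/(2*q t^3)))/(q t*q t) = w1 t"
        using Jn[OF that] Jq[OF that] by (simp add: w1_def field_simps) (simp add: eval_nat_numeral)
      ultimately show ?thesis by (simp add: w_def[abs_def])
    qed
    have dw1: "(w1 has_real_derivative w1d t) (at t)" if "0<t" "t<y" for t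
    proof -
      have nq: "n t * q t \<noteq> 0" "2 * q t ^ 5 \<noteq> 0" using Jn[OF that] Jq[OF that] by auto
      note a = DERIV_divide[OF dc1[OF JI[OF that]] DERIV_mult[OF dn[OF JI[OF that] nzphi[OF that]] dq[OF JI[OF that]]] nq(1)]
      note b = DERIV_divide[OF DERIV_mult[OF dn[OF JI[OF that] nzphi[OF that]] dc2[OF JI[OF that]]] DERIV_cmult[OF DERIV_power[OF dq[OF JI[OF that]]]] nq(2)]
      note c = DERIV_diff[OF a b]
      show ?thesis unfolding w1_def[abs_def]
        apply (rule DERIV_cong[OF c])
        unfolding w1d_def using Jn[OF that] Jq[OF that]
        apply (simp add: field_simps q4[symmetric])
        apply algebra
        done
    qed
    have key: "w1d t + p t * w t \<ge> 0" if "0<t" "t<y" for t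
    proof -
      have n: "n t > 0" and q: "q t > 0" using Jn[OF that] Jq[OF that] by auto
      have nf1: "norm (f1 t) = q t ^ 2" using q2[of t] by simp
      define Sv where "Sv = inner (f1 t) (f3 t) / (norm (f1 t))^2
          - 3 * (inner (f1 t) (f2 t))^2 / (norm (f1 t))^4 + 3/2 * (norm (f2 t))^2 / (norm (f1 t))^2"
      have Sv: "Sv \<le> 2 * p t" unfolding Sv_def using S[of t] that y by simp
      have Sv': "Sv = inner (f1 t) (f3 t) / q t ^ 4 - 3 * (c2 t)^2 / q t ^ 8 + 3/2 * inner (f2 t) (f2 t) / q t ^ 4"
        unfolding Sv_def nf1 c2_def by (simp add: power2_norm_eq_inner flip: power_mult)
      have id: "w1d t + 1/2 * Sv * (n t / q t) =
         (4*(n t)^2*(q t^4)^3 + 4*(n t)^2*(q t^4)^2*inner (\<phi> t) (f2 t) - 4*(q t^4)^2*(c1 t)^2 - 4*(n t)^2*c1 t*c2 t*(q t^4)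
          - ((n t)^2)^2*(c2 t)^2 + ((n t)^2)^2*inner (f2 t) (f2 t)*(q t^4)) / (4*n t^3*q t^9)"
        unfolding Sv' w1d_def by (rule scal_id[OF n q])
      have E: "0 \<le> 4*(n t)^2*(q t^4)^3 + 4*(n t)^2*(q t^4)^2*inner (\<phi> t) (f2 t) - 4*(q t^4)^2*(c1 t)^2 - 4*(n t)^2*c1 t*c2 t*(q t^4)
          - ((n t)^2)^2*(c2 t)^2 + ((n t)^2)^2*inner (f2 t) (f2 t)*(q t^4)"
        using vec_ineq[of "f1 t" "\<phi> t" "f2 t"] nz[of t] JI[OF that] unfolding n2 q4 c1_def c2_def
        by (simp add: I_def inner_commute)
      have "0 \<le> w1d t + 1/2 * Sv * (n t / q t)" unfolding id using E n q by simp
      moreover have "0 \<le> (p t - Sv/2) * w t" using Sv n q by (simp add: w_def)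
      ultimately show ?thesis by (simp add: w_def algebra_simps)
    qed
    have dQ: "(Q has_real_derivative U t * (w1d t + p t * w t)) (at t)" if "0<t" "t<y" for t
    proof -
      note c = DERIV_diff[OF DERIV_mult'[OF dw1[OF that] dU[of t]] DERIV_mult'[OF dw[OF that] dU1[of t]]]
      show ?thesis unfolding Q_def[abs_def]
        by (rule DERIV_cong[OF c]) (use JI[OF that] in \<open>auto simp: I_def algebra_simps\<close>)
    qed
    have Qmono: "Q s \<le> Q t" if "0 < s" "s \<le> t" "t < y" for s t
      using that by (intro DERIV_nonneg_imp_nondecreasing[OF that(2)])
        (auto intro!: exI dQ mult_nonneg_nonneg key intro: less_imp_le[OF JU])
    have Qnn: "0 \<le> Q t" if "0 < t" "t < y" for t
      by (rule tendsto_upperbound[OF L1 eventually_at_rightI[of 0 t]]) (use Qmono that in auto)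
    have dR: "((\<lambda>t. w t / U t) has_real_derivative Q t / (U t * U t)) (at t)" if "0<t" "t<y" for t
    proof -
      note c = DERIV_divide[OF dw[OF that] dU[of t]]
      show ?thesis
        by (rule DERIV_cong[OF c]) (use JI[OF that] JU[OF that] in \<open>auto simp: I_def Q_def algebra_simps\<close>)
    qed
    have Rmono: "w s / U s \<le> w x / U x" if "0 < s" "s \<le> x" for s
      using that x by (intro DERIV_nonneg_imp_nondecreasing[OF that(2)])
        (auto intro!: exI dR divide_nonneg_nonneg Qnn)
    have "1 \<le> w x / U x"
      by (rule tendsto_upperbound[OF L2 eventually_at_rightI[of 0 x]]) (use Rmono x in auto)
    then show ?thesis using JU[OF x] by (simp add: field_simps)
  qed
  have "\<exists>\<delta>>0. \<forall>t. 0 < t \<and> t < \<delta> \<longrightarrow> \<phi> t \<noteq> 0"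
  proof -
    have "((\<lambda>y. norm ((1/y) *\<^sub>R \<phi> y)) \<longlongrightarrow> norm (f1 0)) (at_right 0)" by (intro tendsto_norm lphi)
    then have "\<forall>\<^sub>F y in at_right 0. 1/2 < norm ((1/y) *\<^sub>R \<phi> y)"
      using i0 by (intro order_tendstoD(1)) auto
    then obtain b where b: "b > 0" "\<And>y. 0 < y \<Longrightarrow> y < b \<Longrightarrow> 1/2 < norm ((1/y) *\<^sub>R \<phi> y)"
      by (auto simp: eventually_at_right_field)
    show ?thesis
    proof (intro exI[of _ b] conjI allI impI)
      fix t assume "0 < t \<and> t < b"
      then show "\<phi> t \<noteq> 0" using b(2)[of t] by auto
    qed (use b in auto)
  qed
  then obtain \<delta> where \<delta>: "\<delta> > 0" "\<And>t. 0 < t \<Longrightarrow> t < \<delta> \<Longrightarrow> \<phi> t \<noteq> 0" by blast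
  have nzall: "\<phi> t \<noteq> 0" if "0 < t" "t < 1" for t
  proof
    assume z0: "\<phi> t = 0"
    have t\<delta>: "\<delta> \<le> t" using \<delta>(2)[of t] that z0 by force
    define T where "T = {s \<in> {\<delta>/2..t}. \<phi> s = 0}"
    have cT: "closed T" unfolding T_def
      by (rule continuous_closed_preimage_constant)
        (use \<delta>(1) that in \<open>auto intro!: continuous_at_imp_continuous_on cphi simp: I_def\<close>)
    have neT: "T \<noteq> {}" "bdd_below T" using t\<delta> z0 \<delta>(1)
      by (auto simp: T_def intro!: bdd_belowI[of _ "\<delta>/2"] exI[of _ t])
    define z where "z = Inf T"
    have zT: "z \<in> T" using closed_contains_Inf[OF neT cT] by (simp add: z_def)
    then have z: "\<delta>/2 \<le> z" "z \<le> t" "\<phi> z = 0" by (auto simp: T_def)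
    have zpos: "0 < z" using z(1) \<delta>(1) by simp
    have nzb: "\<phi> s \<noteq> 0" if "0 < s" "s < z" for s
    proof
      assume s0: "\<phi> s = 0"
      show False
      proof (cases "s < \<delta>")
        case True then show False using \<delta>(2) that s0 by auto
      next
        case False then have "s \<in> T" using that z s0 \<delta>(1) by (auto simp: T_def)
        then have "z \<le> s" unfolding z_def by (rule cInf_lower) (use neT in auto)
        then show False using that by simp
      qed
    qed
    have le: "U s \<le> w s" if "0 < s" "s < z" for s
      using stepA[where y=z and x=s] nzb that zpos z(2) \<open>t < 1\<close> by auto
    have "U z \<le> w z"
    proof (rule tendsto_le[of "at_left z" w "w z" U "U z"])
      show "at_left z \<noteq> bot" by simp
      show "(w \<longlongrightarrow> w z) (at_left z)"
        using cw[of z] zpos z(2) \<open>t < 1\<close> by (auto simp: I_def isCont_def intro: Lim_at_imp_Lim_at_within)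
      show "(U \<longlongrightarrow> U z) (at_left z)"
        using cU[of z] zpos z(2) \<open>t < 1\<close> by (auto simp: I_def isCont_def intro: Lim_at_imp_Lim_at_within)
      show "\<forall>\<^sub>F s in at_left z. U s \<le> w s"
        by (rule eventually_at_leftI[of 0]) (use le zpos in auto)
    qed
    moreover have "w z = 0" by (simp add: w_def n_def z)
    moreover have "U z > 0" using Upos zpos z(2) \<open>t < 1\<close> by simp
    ultimately show False by simp
  qed
  show "\<And>x. 0 < x \<Longrightarrow> x < 1 \<Longrightarrow> U x \<le> norm (\<phi> x) / sqrt (norm (f1 x))"
  proof -
    fix x :: real assume x: "0 < x" "x < 1"
    then have "U x \<le> w x" by (intro stepA[where y=1]) (use nzall in auto)
    then show "U x \<le> norm (\<phi> x) / sqrt (norm (f1 x))" by (simp add: w_def n_def q_def)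
  qed



qed

lemma aux1: "(r::real) > 0 \<Longrightarrow> (r\<^sup>2 * r - F * (g2 / (2 * r))) / (r * r) = r - F * g2 / (2 * r\<^sup>2 * r)"
  by (simp add: field_simps power2_eq_square)

lemma refl_vd:
  fixes f :: "real \<Rightarrow> 'a::real_normed_vector"
  assumes "(f has_vector_derivative f') (at (-t))"
  shows "((\<lambda>s. f (-s)) has_vector_derivative - f') (at t)"
proof -
  have m: "((\<lambda>x. - x) has_vector_derivative (-1::real)) (at t)"
    using has_vector_derivative_minus[OF has_vector_derivative_id] .
  from vector_diff_chain_at[OF m, of f f'] assms show ?thesis by (simp add: o_def)
qed

lemma refl_rd:
  fixes f :: "real \<Rightarrow> real"
  assumes "(f has_real_derivative f') (at (-t))"
  shows "((\<lambda>s. f (-s)) has_real_derivative - f') (at t)"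
  using refl_vd[of f f' t] assms by (simp add: has_real_derivative_iff_has_vector_derivative)

theorem mainTheorem2:
  fixes p F :: "real \<Rightarrow> real" and \<phi> :: "real \<Rightarrow> real ^ 'n"
  assumes p_pos: "\<forall>x\<in>{-1<..<1}. p x > 0"
    and p_cont: "continuous_on {-1<..<1} p"
    and p_even: "\<forall>x\<in>{-1<..<1}. p (- x) = p x"
    and p_disc: "disconjugate_on {-1<..<1} p"
    and F_C3: "C3_on {-1<..<1} F"
    and F_nonsing: "\<forall>x\<in>{-1<..<1}. deriv F x \<noteq> 0"
    and F_schw: "\<forall>x\<in>{-1<..<1}. schwarzian F x = 2 * p x"
    and F_init: "F 0 = 0" "deriv F 0 = 1" "deriv (deriv F) 0 = 0"
    and phi_C3: "C3_on {-1<..<1} \<phi>"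
    and phi_nonsing: "\<forall>x\<in>{-1<..<1}. vd \<phi> x \<noteq> 0"
    and phi_init: "\<phi> 0 = 0" "norm (vd \<phi> 0) = 1" "inner (vd \<phi> 0) (vd (vd \<phi>) 0) = 0"
    and phi_S1: "\<forall>x\<in>{-1<..<1}. ahlfors_S1 \<phi> x \<le> 2 * p x"
  shows "\<forall>x\<in>{-1<..<1}. norm (\<phi> x) / sqrt (norm (vd \<phi> x)) \<ge> \<bar>F x\<bar> / sqrt (deriv F x)"
proof -
  define I where "I = {-1<..<1::real}"
  have oI: "open I" by (simp add: I_def)
  have I0: "0 \<in> I" by (simp add: I_def)
  obtain f1 f2 f3 where
    d1: "\<And>t. t \<in> I \<Longrightarrow> (\<phi> has_vector_derivative f1 t) (at t)" and
    d2: "\<And>t. t \<in> I \<Longrightarrow> (f1 has_vector_derivative f2 t) (at t)" and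
    d3: "\<And>t. t \<in> I \<Longrightarrow> (f2 has_vector_derivative f3 t) (at t)"
    using phi_C3 unfolding C3_on_def I_def by blast
  obtain g1 g2 g3 where
    e1: "\<And>t. t \<in> I \<Longrightarrow> (F has_real_derivative g1 t) (at t)" and
    e2: "\<And>t. t \<in> I \<Longrightarrow> (g1 has_real_derivative g2 t) (at t)" and
    e3: "\<And>t. t \<in> I \<Longrightarrow> (g2 has_real_derivative g3 t) (at t)"
    using F_C3 unfolding C3_on_def I_def has_real_derivative_iff_has_vector_derivative by blast
  have v1: "vd \<phi> t = f1 t" if "t \<in> I" for t
    unfolding vd_def using vector_derivative_at[OF d1[OF that]] .
  have v2: "vd (vd \<phi>) t = f2 t" if "t \<in> I" for t
  proof -
    have "(vd \<phi> has_vector_derivative f2 t) (at t)"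
      by (rule has_vector_derivative_transform_within_open[OF d2[OF that] oI that]) (simp add: v1)
    then show ?thesis unfolding vd_def[of "vd \<phi>"] by (rule vector_derivative_at)
  qed
  have v3: "vd (vd (vd \<phi>)) t = f3 t" if "t \<in> I" for t
  proof -
    have "(vd (vd \<phi>) has_vector_derivative f3 t) (at t)"
      by (rule has_vector_derivative_transform_within_open[OF d3[OF that] oI that]) (simp add: v2)
    then show ?thesis unfolding vd_def[of "vd (vd \<phi>)"] by (rule vector_derivative_at)
  qed
  have S1: "ahlfors_S1 \<phi> t = inner (f1 t) (f3 t) / (norm (f1 t))^2
          - 3 * (inner (f1 t) (f2 t))^2 / (norm (f1 t))^4 + 3/2 * (norm (f2 t))^2 / (norm (f1 t))^2" if "t \<in> I" for t
    unfolding ahlfors_S1_def Let_def using that by (simp add: v1 v2 v3)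
  have D1: "deriv F t = g1 t" if "t \<in> I" for t using DERIV_imp_deriv[OF e1[OF that]] .
  have D2: "deriv (deriv F) t = g2 t" if "t \<in> I" for t
  proof -
    have "(deriv F has_real_derivative g2 t) (at t)"
      by (rule has_field_derivative_transform_within_open[OF e2[OF that] oI that]) (simp add: D1)
    then show ?thesis by (rule DERIV_imp_deriv)
  qed
  have g1nz: "g1 t \<noteq> 0" if "t \<in> I" for t using F_nonsing D1[OF that] that unfolding I_def by force
  have g10: "g1 0 = 1" using F_init D1[OF I0] by simp
  have cg1: "isCont g1 t" if "t \<in> I" for t using DERIV_isCont[OF e2[OF that]] .
  have g1pos: "g1 t > 0" if "t \<in> I" for t
  proof (rule ccontr)
    assume "\<not> g1 t > 0"
    then have neg: "g1 t < 0" using g1nz[OF that] by linarith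
    have "\<exists>z. min 0 t \<le> z \<and> z \<le> max 0 t \<and> g1 z = 0"
    proof (cases "t \<ge> 0")
      case True
      then show ?thesis using IVT2[of g1 t 0 0] neg g10 that cg1 by (fastforce simp: I_def)
    next
      case False
      then show ?thesis using IVT[of g1 t 0 0] neg g10 that cg1 by (fastforce simp: I_def)
    qed
    then obtain z where "min 0 t \<le> z" "z \<le> max 0 t" "g1 z = 0" by blast
    moreover have "z \<in> I" using calculation that by (auto simp: I_def)
    ultimately show False using g1nz by blast
  qed
  have sch: "g3 t = 2 * p t * g1 t + 3/2 * (g2 t)^2 / g1 t" if "t \<in> I" for t
  proof -
    have "((\<lambda>s. g2 s / g1 s) has_real_derivative (g3 t * g1 t - g2 t * g2 t) / (g1 t * g1 t)) (at t)"
      by (rule DERIV_divide[OF e3[OF that] e2[OF that] g1nz[OF that]])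
    then have "((\<lambda>s. deriv (deriv F) s / deriv F s) has_real_derivative (g3 t * g1 t - g2 t * g2 t) / (g1 t * g1 t)) (at t)"
      by (rule has_field_derivative_transform_within_open[OF _ oI that]) (simp add: D1 D2)
    then have "schwarzian F t = (g3 t * g1 t - g2 t * g2 t) / (g1 t * g1 t) - 1/2 * (g2 t / g1 t)^2"
      unfolding schwarzian_def by (simp add: DERIV_imp_deriv D1[OF that] D2[OF that])
    then have "(g3 t * g1 t - g2 t * g2 t) / (g1 t * g1 t) - 1/2 * (g2 t / g1 t)^2 = 2 * p t"
      using F_schw that by (simp add: I_def)
    then have e: "(g3 t * g1 t - g2 t * g2 t) / (g1 t * g1 t) = 2 * p t + 1/2 * (g2 t / g1 t)^2" by simp
    have "g3 t = ((g3 t * g1 t - g2 t * g2 t) / (g1 t * g1 t)) * g1 t + g2 t * g2 t / g1 t"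
      using g1pos[OF that] by (simp add: field_simps)
    also have "\<dots> = 2 * p t * g1 t + 3/2 * (g2 t)^2 / g1 t"
      unfolding e using g1pos[OF that] by (simp add: field_simps power2_eq_square)
    finally show ?thesis .
  qed
  define U where "U t = F t / sqrt (g1 t)" for t
  define U1 where "U1 t = sqrt (g1 t) - F t * g2 t / (2 * g1 t * sqrt (g1 t))" for t
  have dsq: "((\<lambda>s. sqrt (g1 s)) has_real_derivative g2 t / (2 * sqrt (g1 t))) (at t)" if "t \<in> I" for t
    using DERIV_chain2[OF DERIV_real_sqrt[OF g1pos[OF that]] e2[OF that]] by (simp add: field_simps)
  have dU: "(U has_real_derivative U1 t) (at t)" if "t \<in> I" for t
  proof -
    obtain r where r: "r > 0" "sqrt (g1 t) = r" "g1 t = r^2" using g1pos[OF \<open>t \<in> I\<close>] by (intro that[of "sqrt (g1 t)"]) auto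
    note c = DERIV_divide[OF e1[OF that] dsq[OF that]]
    show ?thesis unfolding U_def[abs_def]
      apply (rule DERIV_cong[OF c])
      unfolding U1_def unfolding r(2) unfolding r(3)
      apply (use r(1) in simp)
      by (rule aux1[OF r(1)])
  qed
  have dU1: "(U1 has_real_derivative (- p t * U t)) (at t)" if "t \<in> I" for t
  proof -
    obtain r where r: "r > 0" "sqrt (g1 t) = r" "g1 t = r^2" using g1pos[OF \<open>t \<in> I\<close>] by (intro that[of "sqrt (g1 t)"]) auto
    have nz: "2 * g1 t * sqrt (g1 t) \<noteq> 0" using r by simp
    note c = DERIV_diff[OF dsq[OF that] DERIV_divide[OF DERIV_mult[OF e1[OF that] e3[OF that]]
          DERIV_mult[OF DERIV_cmult[OF e2[OF that]] dsq[OF that]] nz]]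
    show ?thesis unfolding U1_def[abs_def]
      apply (rule DERIV_cong[OF c])
      unfolding U_def sch[OF that] unfolding r(2) unfolding r(3) using r(1)
      apply (simp add: field_simps)
      apply algebra
      done
  qed
  have U0: "U 0 = 0" "U1 0 = 1" using F_init g10 by (auto simp: U_def U1_def)
  have cU: "isCont U t" if "t \<in> I" for t using DERIV_isCont[OF dU[OF that]] .
  obtain d where d: "d > 0" "\<And>h. 0 < h \<Longrightarrow> h < d \<Longrightarrow> U 0 < U (0 + h)"
    using DERIV_pos_inc_right[OF dU[OF I0]] U0 by auto
  obtain d' where d': "d' > 0" "\<And>h. 0 < h \<Longrightarrow> h < d' \<Longrightarrow> U (0 - h) < U 0"
    using DERIV_pos_inc_left[OF dU[OF I0]] U0 by auto
  have Unz: "U t \<noteq> 0" if "t \<in> I" "t \<noteq> 0" for t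
  proof -
    have ex: "\<exists>x\<in>{-1<..<1}. U x \<noteq> 0"
    proof -
      have h: "0 < min (d/2) (1/2)" "min (d/2) (1/2) < d" using d(1) by auto
      have "U (min (d/2) (1/2)) > 0" using d(2)[OF h] U0 by simp
      then show ?thesis using h by (intro bexI[of _ "min (d/2) (1/2)"]) auto
    qed
    have "\<not> (\<exists>a\<in>{-1<..<1}. \<exists>b\<in>{-1<..<1}. a \<noteq> b \<and> U a = 0 \<and> U b = 0)"
    proof -
      have H: "(\<forall>x\<in>{-1<..<1}. (U has_real_derivative U1 x) (at x)) \<and>
          (\<forall>x\<in>{-1<..<1}. (U1 has_real_derivative (- p x * U x)) (at x)) \<and> (\<exists>x\<in>{-1<..<1}. U x \<noteq> 0)"
        using dU dU1 ex by (auto simp: I_def)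
      show ?thesis
        by (rule p_disc[unfolded disconjugate_on_def, THEN spec[of _ U], THEN spec[of _ U1], THEN mp, OF H])
    qed
    then have "\<forall>b\<in>{-1<..<1}. 0 = b \<or> U b \<noteq> 0" using U0 by force
    then show ?thesis using that by (auto simp: I_def)
  qed
  have Upos: "U t > 0" if tt: "0 < t" "t < 1" for t
  proof (rule ccontr)
    assume "\<not> U t > 0"
    then have neg: "U t < 0" using Unz[of t] that by (force simp: I_def)
    define h where "h = min (d/2) (t/2)"
    have h: "0 < h" "h < d" "h < t" using d(1) that by (auto simp: h_def)
    have "U h > 0" using d(2)[OF h(1,2)] U0 by simp
    then obtain z where "h \<le> z" "z \<le> t" "U z = 0"
      using IVT2[of U t 0 h] neg h tt cU by (force simp: I_def)
    then show False using Unz[of z] h tt by (auto simp: I_def)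
  qed
  have Uneg: "U t < 0" if tt: "-1 < t" "t < 0" for t
  proof (rule ccontr)
    assume "\<not> U t < 0"
    then have pos: "U t > 0" using Unz[of t] that by (force simp: I_def)
    define h where "h = min (d'/2) (-t/2)"
    have h: "0 < h" "h < d'" "t < -h" using d'(1) that by (auto simp: h_def)
    have "U (-h) < 0" using d'(2)[OF h(1,2)] U0 by simp
    then obtain z where "t \<le> z" "z \<le> -h" "U z = 0"
      using IVT2[of U "-h" 0 t] pos h tt cU by (force simp: I_def)
    then show False using Unz[of z] h tt by (auto simp: I_def)
  qed
  have pos_side: "U x \<le> norm (\<phi> x) / sqrt (norm (f1 x))" if "0 < x" "x < 1" for x
  proof (rule core[of \<phi> f1 f2 f3 U U1 p])
    show "\<And>t. t \<in> {-1<..<1} \<Longrightarrow> (\<phi> has_vector_derivative f1 t) (at t)" using d1 by (simp add: I_def)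
    show "\<And>t. t \<in> {-1<..<1} \<Longrightarrow> (f1 has_vector_derivative f2 t) (at t)" using d2 by (simp add: I_def)
    show "\<And>t. t \<in> {-1<..<1} \<Longrightarrow> (f2 has_vector_derivative f3 t) (at t)" using d3 by (simp add: I_def)
    show "\<And>t. t \<in> {-1<..<1} \<Longrightarrow> f1 t \<noteq> 0" using phi_nonsing v1 by (simp add: I_def)
    show "\<phi> 0 = 0" by (rule phi_init(1))
    show "norm (f1 0) = 1" using phi_init(2) v1[OF I0] by simp
    show "\<And>t. t \<in> {-1<..<1} \<Longrightarrow> (U has_real_derivative U1 t) (at t)" using dU by (simp add: I_def)
    show "\<And>t. t \<in> {-1<..<1} \<Longrightarrow> (U1 has_real_derivative - p t * U t) (at t)" using dU1 by (simp add: I_def)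
    show "U 0 = 0" "U1 0 = 1" by (rule U0)+
    show "\<And>t. 0 < t \<Longrightarrow> t < 1 \<Longrightarrow> 0 < U t" by (rule Upos)
    show "\<And>t. 0 < t \<Longrightarrow> t < 1 \<Longrightarrow> inner (f1 t) (f3 t) / (norm (f1 t))^2
          - 3 * (inner (f1 t) (f2 t))^2 / (norm (f1 t))^4 + 3/2 * (norm (f2 t))^2 / (norm (f1 t))^2 \<le> 2 * p t"
      using phi_S1 S1 by (simp add: I_def)
  qed (use that in auto)
  have neg_side: "- U (-x) \<le> norm (\<phi> (-x)) / sqrt (norm (f1 (-x)))" if "0 < x" "x < 1" for x
  proof -
    have mI: "-t \<in> I" if "t \<in> {-1<..<1}" for t using that by (auto simp: I_def)
    have "(\<lambda>t. - U (- t)) x \<le> norm ((\<lambda>t. \<phi> (-t)) x) / sqrt (norm ((\<lambda>t. - f1 (-t)) x))"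
    proof (rule core[of "\<lambda>t. \<phi> (-t)" "\<lambda>t. - f1 (-t)" "\<lambda>t. f2 (-t)" "\<lambda>t. - f3 (-t)" "\<lambda>t. - U (-t)" "\<lambda>t. U1 (-t)" "\<lambda>t. p (-t)"])
      show "\<And>t. t \<in> {-1<..<1} \<Longrightarrow> ((\<lambda>t. \<phi> (-t)) has_vector_derivative - f1 (-t)) (at t)"
        using refl_vd d1 mI by blast
      show "\<And>t. t \<in> {-1<..<1} \<Longrightarrow> ((\<lambda>t. - f1 (-t)) has_vector_derivative f2 (-t)) (at t)"
        using has_vector_derivative_minus[OF refl_vd[OF d2[OF mI]]] by simp
      show "\<And>t. t \<in> {-1<..<1} \<Longrightarrow> ((\<lambda>t. f2 (-t)) has_vector_derivative - f3 (-t)) (at t)"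
        using refl_vd d3 mI by blast
      show "\<And>t. t \<in> {-1<..<1} \<Longrightarrow> - f1 (-t) \<noteq> 0" using phi_nonsing v1 mI by (force simp: I_def)
      show "\<phi> (-0) = 0" using phi_init(1) by simp
      show "norm (- f1 (-0)) = 1" using phi_init(2) v1[OF I0] by simp
      show "\<And>t. t \<in> {-1<..<1} \<Longrightarrow> ((\<lambda>t. - U (-t)) has_real_derivative U1 (-t)) (at t)"
        using DERIV_minus[OF refl_rd[OF dU[OF mI]]] by simp
      show "\<And>t. t \<in> {-1<..<1} \<Longrightarrow> ((\<lambda>t. U1 (-t)) has_real_derivative - p (-t) * - U (-t)) (at t)"
        using refl_rd[OF dU1[OF mI]] by simp
      show "- U (-0) = 0" "U1 (-0) = 1" using U0 by simp_all
      show "\<And>t. 0 < t \<Longrightarrow> t < 1 \<Longrightarrow> 0 < - U (-t)" using Uneg by force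
      show "\<And>t. 0 < t \<Longrightarrow> t < 1 \<Longrightarrow> inner (- f1 (-t)) (- f3 (-t)) / (norm (- f1 (-t)))^2
          - 3 * (inner (- f1 (-t)) (f2 (-t)))^2 / (norm (- f1 (-t)))^4 + 3/2 * (norm (f2 (-t)))^2 / (norm (- f1 (-t)))^2 \<le> 2 * p (-t)"
        using phi_S1 S1 by (simp add: I_def)
    qed (use that in auto)
    then show ?thesis by simp
  qed
  show ?thesis
  proof
    fix x assume x: "x \<in> {-1<..<1::real}"
    then have xI: "x \<in> I" by (simp add: I_def)
    have rhs: "\<bar>F x\<bar> / sqrt (deriv F x) = \<bar>U x\<bar>"
      using g1pos[OF xI] by (simp add: D1[OF xI] U_def abs_div)
    have vx: "vd \<phi> x = f1 x" by (rule v1[OF xI])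
    consider "x > 0" | "x = 0" | "x < 0" by linarith
    then show "\<bar>F x\<bar> / sqrt (deriv F x) \<le> norm (\<phi> x) / sqrt (norm (vd \<phi> x))"
    proof cases
      case 1
      then show ?thesis unfolding rhs vx using pos_side[of x] Upos[of x] x by simp
    next
      case 2
      then show ?thesis using F_init by simp
    next
      case 3
      then show ?thesis unfolding rhs vx using neg_side[of "-x"] Uneg[of x] x by simp
    qed
  qed
qed

thm_deps mainTheorem2

end
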